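(* Let $\mathcal{P}$ be a distribution on a sample space $\mathcal{S}$, $\Theta\subseteq\mathbb{R}^p$, $l$ a loss, $\mathcal{D}$ a distribution on $[0,1)$, $l_{\rm aug}(s,\theta)=\mathbb{E}_{\lambda\sim\mathcal{D}}[l(s_\lambda,\theta)]$, and $\theta_*=\arg\min_\theta\mathbb{E}_{s\sim\mathcal{P}}[l(s,\theta)]$. Assume the Disjointness assumption, and that for every $\epsilon>0$ there is $l'\in L^2(\mathcal{P})$ with $|l(s,\theta_1)-l(s,\theta_2)|\le l'(s)\|\theta_1-\theta_2\|$ for a.e. $s$ and all $\theta_1,\theta_2$ in the $\epsilon$-ball around $\theta_*$. Then for every $\epsilon>0$ there is $l'_{\rm aug}\in L^2(\mathcal{P})$ such that for a.e. $s$ and all $\theta_1,\theta_2$ in the $\epsilon$-ball around $\theta_*$, $|l_{\rm aug}(s,\theta_1)-l_{\rm aug}(s,\theta_2)|\le l'_{\rm aug}(s)\|\theta_1-\theta_2\|$.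
   Context: Samples $s=(x_0,\dots,x_d,y)$; RIM augmentation with $\lambda=(\lambda_1,\dots,\lambda_d)$, components i.i.d. from $\mathcal{D}$: $x_{0,\lambda_0}=x_0$, $x_{j,\lambda_j}=(1-\lambda_j)x_j+\lambda_jx_{j-1,\lambda_{j-1}}$, $s_\lambda=(x_{0,\lambda_0},\dots,x_{d,\lambda_d},y)$. Disjointness assumption: $\mathcal{S}$ is the disjoint countable union of measurable sets $S_1,S_2,\dots$, each the set of all possible augmentations of a sample, and for $s\in S_j$ and integrable $h$, $\mathbb{E}_{\lambda\sim\mathcal{D}}[h(s_\lambda)]=\mathbb{E}_{s'\sim\mathcal{P}}[h(s')\mid s'\in S_j]$. *)

theory Defs
  imports "HOL-Probability.Probability"
begin

text \<open>A sample is s = (x, y) where x j (for j = 0..d) are the inputs x_0,...,x_d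
  (components x j with j > d are irrelevant and left untouched), and y is the label.\<close>

fun rim_x :: "(nat \<Rightarrow> real) \<Rightarrow> (nat \<Rightarrow> 'x::real_vector) \<Rightarrow> nat \<Rightarrow> 'x" where
  "rim_x lam x 0 = x 0"
| "rim_x lam x (Suc j) = (1 - lam (Suc j)) *\<^sub>R x (Suc j) + lam (Suc j) *\<^sub>R rim_x lam x j"

definition rim_aug :: "nat \<Rightarrow> (nat \<Rightarrow> real) \<Rightarrow> (nat \<Rightarrow> 'x::real_vector) \<times> 'y \<Rightarrow> (nat \<Rightarrow> 'x) \<times> 'y" where
  "rim_aug d lam s = ((\<lambda>j. if j \<le> d then rim_x lam (fst s) j else fst s j), snd s)"

definition lam_dist :: "nat \<Rightarrow> real measure \<Rightarrow> (nat \<Rightarrow> real) measure" where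
  "lam_dist d D = PiM {1..d} (\<lambda>_. D)"

definition l_aug :: "nat \<Rightarrow> real measure \<Rightarrow> ((nat \<Rightarrow> 'x::real_vector) \<times> 'y \<Rightarrow> 'p \<Rightarrow> real)
    \<Rightarrow> (nat \<Rightarrow> 'x) \<times> 'y \<Rightarrow> 'p \<Rightarrow> real" where
  "l_aug d D l s \<theta> = (\<integral>lam. l (rim_aug d lam s) \<theta> \<partial>(lam_dist d D))"

definition in_L2 :: "'a measure \<Rightarrow> ('a \<Rightarrow> real) \<Rightarrow> bool" where
  "in_L2 M f \<longleftrightarrow> f \<in> borel_measurable M \<and> integrable M (\<lambda>s. (f s)\<^sup>2)"

definition disjointness_assumption ::
  "nat \<Rightarrow> real measure \<Rightarrow> ((nat \<Rightarrow> 'x::real_vector) \<times> 'y) measure \<Rightarrow> nat set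
     \<Rightarrow> (nat \<Rightarrow> ((nat \<Rightarrow> 'x) \<times> 'y) set) \<Rightarrow> bool" where
  "disjointness_assumption d D M J S \<longleftrightarrow>
     disjoint_family_on S J \<and>
     (\<Union>j\<in>J. S j) = space M \<and>
     (\<forall>j\<in>J. S j \<in> sets M) \<and>
     (\<forall>j\<in>J. \<exists>s0 \<in> space M. S j = {rim_aug d lam s0 | lam. lam \<in> {1..d} \<rightarrow>\<^sub>E {0..<1}}) \<and>
     (\<forall>j\<in>J. \<forall>s\<in>S j. \<forall>h :: (nat \<Rightarrow> 'x) \<times> 'y \<Rightarrow> real. integrable M h \<longrightarrow>
        (\<integral>lam. h (rim_aug d lam s) \<partial>(lam_dist d D))
          = (\<integral>s'. indicator (S j) s' * h s' \<partial>M) / measure M (S j))"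

end

theory Submission
  imports Defs
begin

lemma block_cs:
  fixes f :: "'a \<Rightarrow> real"
  assumes fm: "finite_measure M" and S: "S \<in> sets M" and fi: "integrable M f"
    and f2: "integrable M (\<lambda>x. (f x)^2)"
  shows "(\<integral>x. indicator S x * f x \<partial>M)^2 \<le> measure M S * (\<integral>x. indicator S x * (f x)^2 \<partial>M)"
proof -
  interpret finite_measure M by (rule fm)
  define A where "A = (\<integral>x. indicator S x * f x \<partial>M)"
  define B where "B = (\<integral>x. indicator S x * (f x)^2 \<partial>M)"
  define m where "m = measure M S"
  have iA: "integrable M (\<lambda>x. indicator S x * f x)"
    using integrable_real_mult_indicator[OF S fi] by (simp add: mult.commute)
  have iB: "integrable M (\<lambda>x. indicator S x * (f x)^2)"
    using integrable_real_mult_indicator[OF S f2] by (simp add: mult.commute)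
  have iS: "integrable M (\<lambda>x. indicator S x :: real)"
    using S by (simp add: emeasure_eq_measure)
  have q: "0 \<le> B - 2*t*A + t^2*m" for t
  proof -
    have "0 \<le> (\<integral>x. indicator S x * (f x - t)^2 \<partial>M)"
      by (intro integral_nonneg_AE) auto
    also have "(\<integral>x. indicator S x * (f x - t)^2 \<partial>M) =
       (\<integral>x. indicator S x * (f x)^2 - (2*t)*(indicator S x * f x) + t^2 * indicator S x \<partial>M)"
      by (rule Bochner_Integration.integral_cong) (auto simp: power2_eq_square algebra_simps)
    also have "\<dots> = B - 2*t*A + t^2*m"
      using iA iB iS S unfolding A_def B_def m_def
      by (simp add: integral_diff integral_add integrable_diff)
    finally show ?thesis .
  qed
  have m0: "m \<ge> 0" unfolding m_def by simp
  show ?thesis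
  proof (cases "m > 0")
    case True
    have "0 \<le> B - 2*(A/m)*A + (A/m)^2*m" by (rule q)
    also have "\<dots> = B - A^2/m" using True by (simp add: power2_eq_square field_simps)
    finally have "A^2/m \<le> B" by simp
    then have "A^2 \<le> m * B" using True by (simp add: field_simps)
    then show ?thesis unfolding A_def B_def m_def .
  next
    case False
    then have m: "m = 0" using m0 by simp
    have "A = 0"
    proof (rule ccontr)
      assume "A \<noteq> 0"
      have "0 \<le> B - 2*((B+1)/(2*A))*A + ((B+1)/(2*A))^2*m" by (rule q)
      also have "\<dots> = -1" using \<open>A \<noteq> 0\<close> m by (simp add: field_simps)
      finally show False by simp
    qed
    then show ?thesis unfolding A_def[symmetric] B_def[symmetric] m_def[symmetric] using m by simp
  qed
qed

lemma suminf_ind_single: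
  fixes g :: "nat \<Rightarrow> 'b::{t2_space, topological_comm_monoid_add, mult_zero, zero_neq_one, monoid_mult}"
  assumes "s \<in> T k" "\<And>j. j \<noteq> k \<Longrightarrow> s \<notin> T j"
  shows "(\<Sum>j. indicator (T j) s * g j) = g k"
proof -
  have eq: "(\<lambda>j. indicator (T j) s * g j) = (\<lambda>j. if j = k then g j else 0)"
  proof
    fix j show "indicator (T j) s * g j = (if j = k then g j else 0)"
      using assms(1) assms(2)[of j] by (cases "j = k") simp_all
  qed
  show ?thesis unfolding eq by (rule sums_unique[OF sums_single, symmetric])
qed

theorem proposition1:
  fixes M :: "((nat \<Rightarrow> 'x::real_vector) \<times> 'y) measure"
    and D :: "real measure"
    and d :: nat
    and \<Theta> :: "'p::euclidean_space set"
    and l :: "(nat \<Rightarrow> 'x) \<times> 'y \<Rightarrow> 'p \<Rightarrow> real"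
    and \<theta>s :: 'p
    and J :: "nat set"
    and S :: "nat \<Rightarrow> ((nat \<Rightarrow> 'x) \<times> 'y) set"
  assumes P: "prob_space M"
    and D: "prob_space D" "sets D = sets borel" "AE t in D. t \<in> {0..<1}"
    and l_int: "\<forall>\<theta>\<in>\<Theta>. integrable M (\<lambda>s. l s \<theta>)"
    and argmin: "\<theta>s \<in> \<Theta>" "\<forall>\<theta>\<in>\<Theta>. (\<integral>s. l s \<theta>s \<partial>M) \<le> (\<integral>s. l s \<theta> \<partial>M)"
    and disj: "disjointness_assumption d D M J S"
    and lip: "\<forall>\<epsilon>>0. \<exists>l'. in_L2 M l' \<and>
               (AE s in M. \<forall>\<theta>1\<in>\<Theta> \<inter> ball \<theta>s \<epsilon>. \<forall>\<theta>2\<in>\<Theta> \<inter> ball \<theta>s \<epsilon>.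
                  \<bar>l s \<theta>1 - l s \<theta>2\<bar> \<le> l' s * norm (\<theta>1 - \<theta>2))"
  shows "\<forall>\<epsilon>>0. \<exists>l'_aug. in_L2 M l'_aug \<and>
               (AE s in M. \<forall>\<theta>1\<in>\<Theta> \<inter> ball \<theta>s \<epsilon>. \<forall>\<theta>2\<in>\<Theta> \<inter> ball \<theta>s \<epsilon>.
                  \<bar>l_aug d D l s \<theta>1 - l_aug d D l s \<theta>2\<bar> \<le> l'_aug s * norm (\<theta>1 - \<theta>2))"
proof (intro allI impI)
  fix \<epsilon> :: real assume "\<epsilon> > 0"
  then obtain l' where L2: "in_L2 M l'" and ae: "AE s in M. \<forall>\<theta>1\<in>\<Theta> \<inter> ball \<theta>s \<epsilon>. \<forall>\<theta>2\<in>\<Theta> \<inter> ball \<theta>s \<epsilon>.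
                  \<bar>l s \<theta>1 - l s \<theta>2\<bar> \<le> l' s * norm (\<theta>1 - \<theta>2)"
    using lip by blast
  interpret prob_space M by (rule P)
  note dd = disj[unfolded disjointness_assumption_def]
  have dfam: "disjoint_family_on S J" using dd by (rule conjunct1)
  have cover: "(\<Union>j\<in>J. S j) = space M" using dd[THEN conjunct2] by (rule conjunct1)
  have meas0: "\<forall>j\<in>J. S j \<in> sets M" using dd[THEN conjunct2, THEN conjunct2] by (rule conjunct1)
  have dis0: "\<forall>j\<in>J. \<forall>s\<in>S j. \<forall>h :: (nat \<Rightarrow> 'x) \<times> 'y \<Rightarrow> real. integrable M h \<longrightarrow>
        (\<integral>lam. h (rim_aug d lam s) \<partial>(lam_dist d D))
          = (\<integral>s'. indicator (S j) s' * h s' \<partial>M) / measure M (S j)"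
    using dd[THEN conjunct2, THEN conjunct2, THEN conjunct2] by (rule conjunct2)
  have meas: "\<And>j. j \<in> J \<Longrightarrow> S j \<in> sets M" using meas0 by (rule bspec)
  have dis: "\<And>j s h. j \<in> J \<Longrightarrow> s \<in> S j \<Longrightarrow> integrable M h \<Longrightarrow>
        (\<integral>lam. h (rim_aug d lam s) \<partial>(lam_dist d D))
          = (\<integral>s'. indicator (S j) s' * h s' \<partial>M) / measure M (S j)"
    using dis0 by blast
  have l'm[measurable]: "l' \<in> borel_measurable M" and l'2: "integrable M (\<lambda>s. (l' s)^2)"
    using L2 unfolding in_L2_def by auto
  have l'i: "integrable M l'"
  proof (rule Bochner_Integration.integrable_bound[of _ "\<lambda>s. 1 + (l' s)^2"])
    show "integrable M (\<lambda>s. 1 + (l' s)^2)" using l'2 by simp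
    show "AE x in M. norm (l' x) \<le> norm (1 + (l' x)^2)"
    proof (intro AE_I2)
      fix x
      have "0 \<le> (\<bar>l' x\<bar> - 1)^2" by simp
      then have "0 \<le> (l' x)^2 - 2 * \<bar>l' x\<bar> + 1" by (simp add: power2_diff)
      then have "\<bar>l' x\<bar> \<le> 1 + (l' x)^2" by linarith
      then show "norm (l' x) \<le> norm (1 + (l' x)^2)" by simp
    qed
  qed simp
  define S' where "S' j = (if j \<in> J then S j else {})" for j
  define c where "c j = (\<integral>x. indicator (S' j) x * l' x \<partial>M) / measure M (S' j)" for j
  define G where "G s = (\<Sum>j. indicator (S' j) s * c j)" for s
  have S'm[measurable]: "S' j \<in> sets M" for j using meas by (simp add: S'_def)
  have S'disj: "\<And>j k s. s \<in> S' k \<Longrightarrow> j \<noteq> k \<Longrightarrow> s \<notin> S' j"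
    using dfam unfolding disjoint_family_on_def S'_def by (auto split: if_splits)
  have cov: "\<exists>k. s \<in> S' k" if "s \<in> space M" for s
    using cover that unfolding S'_def by auto
  have Gval: "G s = c k" if "s \<in> S' k" for s k
    unfolding G_def by (rule suminf_ind_single[of s S' k, OF that]) (rule S'disj[OF that])
  have Gm[measurable]: "G \<in> borel_measurable M"
    unfolding G_def by measurable
  have G2: "integrable M (\<lambda>s. (G s)^2)"
  proof (rule integrableI_bounded)
    show "(\<lambda>s. (G s)^2) \<in> borel_measurable M" by measurable
    have eq1: "(\<integral>\<^sup>+s. ennreal (norm ((G s)^2)) \<partial>M) = (\<integral>\<^sup>+s. (\<Sum>j. indicator (S' j) s * ennreal ((c j)^2)) \<partial>M)"
    proof (rule nn_integral_cong)
      fix s assume "s \<in> space M"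
      then obtain k where k: "s \<in> S' k" using cov by blast
      have "(\<Sum>j. indicator (S' j) s * ennreal ((c j)^2)) = ennreal ((c k)^2)"
        by (rule suminf_ind_single[of s S' k, OF k]) (rule S'disj[OF k])
      then show "ennreal (norm ((G s)^2)) = (\<Sum>j. indicator (S' j) s * ennreal ((c j)^2))"
        using Gval[OF k] by simp
    qed
    also have "\<dots> = (\<Sum>j. \<integral>\<^sup>+s. indicator (S' j) s * ennreal ((c j)^2) \<partial>M)"
      by (rule nn_integral_suminf) measurable
    also have "\<dots> \<le> (\<Sum>j. \<integral>\<^sup>+s. indicator (S' j) s * ennreal ((l' s)^2) \<partial>M)"
    proof (rule suminf_le)
      fix j
      have iB: "integrable M (\<lambda>x. indicator (S' j) x * (l' x)^2)"
        using integrable_real_mult_indicator[OF S'm l'2] by (simp add: mult.commute)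
      have "(\<integral>\<^sup>+s. indicator (S' j) s * ennreal ((c j)^2) \<partial>M) = ennreal ((c j)^2) * emeasure M (S' j)"
        by (subst mult.commute) (simp add: nn_integral_cmult_indicator)
      also have "\<dots> = ennreal ((c j)^2 * measure M (S' j))"
        by (simp add: emeasure_eq_measure ennreal_mult)
      also have "\<dots> \<le> ennreal (\<integral>x. indicator (S' j) x * (l' x)^2 \<partial>M)"
      proof (rule ennreal_leI)
        have cs: "(\<integral>x. indicator (S' j) x * l' x \<partial>M)^2 \<le> measure M (S' j) * (\<integral>x. indicator (S' j) x * (l' x)^2 \<partial>M)"
          by (rule block_cs) (auto simp: l'i l'2 finite_measure_axioms)
        have B0: "0 \<le> (\<integral>x. indicator (S' j) x * (l' x)^2 \<partial>M)"
          by (intro integral_nonneg_AE) auto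
        show "(c j)^2 * measure M (S' j) \<le> (\<integral>x. indicator (S' j) x * (l' x)^2 \<partial>M)"
        proof (cases "measure M (S' j) = 0")
          case True then show ?thesis using B0 by simp
        next
          case False
          then have mp: "measure M (S' j) > 0" using measure_nonneg[of M "S' j"] by linarith
          then show ?thesis using cs unfolding c_def by (simp add: power2_eq_square field_simps)
        qed
      qed
      also have "\<dots> = (\<integral>\<^sup>+s. ennreal (indicator (S' j) s * (l' s)^2) \<partial>M)"
        by (rule nn_integral_eq_integral[symmetric]) (auto simp: iB)
      also have "\<dots> = (\<integral>\<^sup>+s. indicator (S' j) s * ennreal ((l' s)^2) \<partial>M)"
        by (intro nn_integral_cong) (auto simp: indicator_def)
      finally show "(\<integral>\<^sup>+s. indicator (S' j) s * ennreal ((c j)^2) \<partial>M) \<le> (\<integral>\<^sup>+s. indicator (S' j) s * ennreal ((l' s)^2) \<partial>M)" .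
    qed auto
    also have "\<dots> = (\<integral>\<^sup>+s. (\<Sum>j. indicator (S' j) s * ennreal ((l' s)^2)) \<partial>M)"
      by (rule nn_integral_suminf[symmetric]) measurable
    also have "\<dots> = (\<integral>\<^sup>+s. ennreal ((l' s)^2) \<partial>M)"
    proof (rule nn_integral_cong)
      fix s assume "s \<in> space M"
      then obtain k where k: "s \<in> S' k" using cov by blast
      show "(\<Sum>j. indicator (S' j) s * ennreal ((l' s)^2)) = ennreal ((l' s)^2)"
        by (rule suminf_ind_single[of s S' k, OF k]) (rule S'disj[OF k])
    qed
    also have "\<dots> = ennreal (\<integral>s. (l' s)^2 \<partial>M)"
      by (rule nn_integral_eq_integral) (auto simp: l'2)
    also have "\<dots> < \<infinity>" by simp
    finally show "(\<integral>\<^sup>+s. ennreal (norm ((G s)^2)) \<partial>M) < \<infinity>" .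
  qed
  show "\<exists>l'_aug. in_L2 M l'_aug \<and>
               (AE s in M. \<forall>\<theta>1\<in>\<Theta> \<inter> ball \<theta>s \<epsilon>. \<forall>\<theta>2\<in>\<Theta> \<inter> ball \<theta>s \<epsilon>.
                  \<bar>l_aug d D l s \<theta>1 - l_aug d D l s \<theta>2\<bar> \<le> l'_aug s * norm (\<theta>1 - \<theta>2))"
  proof (intro exI conjI)
    show "in_L2 M G" unfolding in_L2_def using Gm G2 by simp
    show "AE s in M. \<forall>\<theta>1\<in>\<Theta> \<inter> ball \<theta>s \<epsilon>. \<forall>\<theta>2\<in>\<Theta> \<inter> ball \<theta>s \<epsilon>.
                  \<bar>l_aug d D l s \<theta>1 - l_aug d D l s \<theta>2\<bar> \<le> G s * norm (\<theta>1 - \<theta>2)"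
    proof (intro AE_I2 ballI)
      fix s \<theta>1 \<theta>2 assume s: "s \<in> space M" and t1: "\<theta>1 \<in> \<Theta> \<inter> ball \<theta>s \<epsilon>" and t2: "\<theta>2 \<in> \<Theta> \<inter> ball \<theta>s \<epsilon>"
      obtain k where k: "k \<in> J" "s \<in> S k" using cover s by blast
      have Sk[measurable]: "S k \<in> sets M" using meas k by simp
      define m where "m = measure M (S k)"
      have i1: "integrable M (\<lambda>s. l s \<theta>1)" and i2: "integrable M (\<lambda>s. l s \<theta>2)"
        using l_int t1 t2 by auto
      have ii: "integrable M (\<lambda>x. indicator (S k) x * f x)" if "integrable M f" for f :: "_ \<Rightarrow> real"
        using integrable_real_mult_indicator[OF Sk that] by (simp add: mult.commute)
      have e1: "l_aug d D l s \<theta>1 = (\<integral>x. indicator (S k) x * l x \<theta>1 \<partial>M) / m"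
        unfolding l_aug_def m_def using dis[OF k i1] by simp
      have e2: "l_aug d D l s \<theta>2 = (\<integral>x. indicator (S k) x * l x \<theta>2 \<partial>M) / m"
        unfolding l_aug_def m_def using dis[OF k i2] by simp
      let ?n = "norm (\<theta>1 - \<theta>2)"
      have "l_aug d D l s \<theta>1 - l_aug d D l s \<theta>2 = (\<integral>x. indicator (S k) x * l x \<theta>1 - indicator (S k) x * l x \<theta>2 \<partial>M) / m"
        unfolding e1 e2 using ii[OF i1] ii[OF i2] by (simp add: integral_diff diff_divide_distrib)
      also have "(\<integral>x. indicator (S k) x * l x \<theta>1 - indicator (S k) x * l x \<theta>2 \<partial>M) = (\<integral>x. indicator (S k) x * (l x \<theta>1 - l x \<theta>2) \<partial>M)"
        by (simp add: right_diff_distrib)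
      finally have dq: "l_aug d D l s \<theta>1 - l_aug d D l s \<theta>2 = (\<integral>x. indicator (S k) x * (l x \<theta>1 - l x \<theta>2) \<partial>M) / m" .
      have iD: "integrable M (\<lambda>x. indicator (S k) x * (l x \<theta>1 - l x \<theta>2))"
        using ii[of "\<lambda>x. l x \<theta>1 - l x \<theta>2"] i1 i2 by simp
      have "\<bar>\<integral>x. indicator (S k) x * (l x \<theta>1 - l x \<theta>2) \<partial>M\<bar> \<le> (\<integral>x. norm (indicator (S k) x * (l x \<theta>1 - l x \<theta>2)) \<partial>M)"
        using integral_norm_bound[of M "\<lambda>x. indicator (S k) x * (l x \<theta>1 - l x \<theta>2)"] by simp
      also have "\<dots> \<le> (\<integral>x. indicator (S k) x * l' x * ?n \<partial>M)"
      proof (rule integral_mono_AE)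
        show "integrable M (\<lambda>x. norm (indicator (S k) x * (l x \<theta>1 - l x \<theta>2)))" using iD by simp
        show "integrable M (\<lambda>x. indicator (S k) x * l' x * ?n)" using ii[OF l'i] by simp
        show "AE x in M. norm (indicator (S k) x * (l x \<theta>1 - l x \<theta>2)) \<le> indicator (S k) x * l' x * ?n"
          using ae
        proof (rule AE_mp, intro AE_I2 impI)
          fix x assume "\<forall>\<theta>1\<in>\<Theta> \<inter> ball \<theta>s \<epsilon>. \<forall>\<theta>2\<in>\<Theta> \<inter> ball \<theta>s \<epsilon>. \<bar>l x \<theta>1 - l x \<theta>2\<bar> \<le> l' x * norm (\<theta>1 - \<theta>2)"
          then have "\<bar>l x \<theta>1 - l x \<theta>2\<bar> \<le> l' x * ?n" using t1 t2 by blast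
          then show "norm (indicator (S k) x * (l x \<theta>1 - l x \<theta>2)) \<le> indicator (S k) x * l' x * ?n"
            by (auto simp: indicator_def abs_mult)
        qed
      qed
      also have "\<dots> = (\<integral>x. indicator (S k) x * l' x \<partial>M) * ?n" by simp
      finally have bnd: "\<bar>\<integral>x. indicator (S k) x * (l x \<theta>1 - l x \<theta>2) \<partial>M\<bar> \<le> (\<integral>x. indicator (S k) x * l' x \<partial>M) * ?n" .
      have m0: "m \<ge> 0" unfolding m_def by simp
      have "\<bar>l_aug d D l s \<theta>1 - l_aug d D l s \<theta>2\<bar> = \<bar>\<integral>x. indicator (S k) x * (l x \<theta>1 - l x \<theta>2) \<partial>M\<bar> / m"
        unfolding dq using m0 by simp
      also have "\<dots> \<le> (\<integral>x. indicator (S k) x * l' x \<partial>M) * ?n / m"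
        using bnd m0 by (rule divide_right_mono)
      also have "\<dots> = c k * ?n"
        unfolding c_def S'_def m_def using k by simp
      also have "c k = G s" using Gval[of s k] k unfolding S'_def by simp
      finally show "\<bar>l_aug d D l s \<theta>1 - l_aug d D l s \<theta>2\<bar> \<le> G s * ?n" .
    qed
  qed
qed

end
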